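(* For integers $n>4$ and $k\ge1$, $F_{4,k}(n)=0$ if and only if $(k,n)\in\{(3,8),(5,8),(6,12),(7,8)\}$. In particular $F_{4,k}$ has no positive integer root for $k>7$.
   Context: For an integer $j\ge0$, $\binom{x}{j}=x(x-1)\cdots(x-j+1)/j!$ as a polynomial in $x$, and $\binom{x}{j}=0$ for $j<0$. For integers $s\ge1$, $k\ge1$, the Moser polynomial is $F_{s,k}(x)=\sum_{p=1}^{s}(-1)^{p-1}p^{k-1}\binom{x}{s-p}$. *)

theory Defs
  imports Complex_Main
begin

text \<open>Since 1 <= p <= s, the index s-p is never negative.\<close>
definition moser :: "nat \<Rightarrow> nat \<Rightarrow> real \<Rightarrow> real" where
  "moser s k x = (\<Sum>p=1..s. (-1) ^ (p - 1) * (of_nat p) ^ (k - 1) * (x gchoose (s - p)))"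

end

theory Submission
  imports Defs
begin

definition G :: "nat \<Rightarrow> int \<Rightarrow> int" where
 "G k n = n*(n-1)*(n-2) - 3*2^(k-1)*n*(n-1) + 6*3^(k-1)*n - 6*4^(k-1)"

lemma moser_G: "moser 4 k (of_int n) = of_int (G k n) / 6"
  unfolding moser_def G_def
  by (simp add: numeral_eq_Suc gbinomial_Suc atMost_Suc field_simps sum.atLeast_Suc_atMost)

lemma dvd_3pow2: "(n::int) > 0 \<Longrightarrow> n dvd 3 * 2^e \<Longrightarrow> \<exists>i\<le>e. n = 2^i \<or> n = 3 * 2^i"
proof (induction e arbitrary: n)
  case 0
  then have "n \<le> 3" by (simp add: zdvd_imp_le)
  with 0 have "n = 1 \<or> n = 2 \<or> n = 3" by auto
  with 0 show ?case by auto
next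
  case (Suc e)
  show ?case
  proof (cases "even n")
    case True
    then obtain n' where n': "n = 2*n'" by blast
    with Suc.prems have "n' > 0" "n' dvd 3 * 2^e" by auto
    from Suc.IH[OF this] obtain i where "i \<le> e" "n' = 2^i \<or> n' = 3*2^i" by blast
    with n' show ?thesis by (intro exI[of _ "Suc i"]) auto
  next
    case False
    then have "coprime n (2^Suc e)" by (simp add: coprime_commute)
    with Suc.prems(2) have "n dvd 3"
      by (metis coprime_dvd_mult_left_iff)
    then have "n \<le> 3" by (simp add: zdvd_imp_le)
    with Suc.prems have "n = 1 \<or> n = 2 \<or> n = 3" by auto
    with False have "n = 1 \<or> n = 3" by auto
    then show ?thesis by (intro exI[of _ 0]) auto
  qed
qed

lemma pow3_mod16: "(3::int)^j mod 16 \<in> {1,3,9,11}"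
proof (induction j)
  case 0 then show ?case by simp
next
  case (Suc j)
  have "(3::int)^Suc j mod 16 = (3 * ((3::int)^j mod 16)) mod 16" by (simp add: mod_mult_right_eq)
  with Suc show ?case by auto
qed

lemma pow_ratio: "j \<ge> 12 \<Longrightarrow> 31 * (3::int)^j \<le> 4^j"
proof (induction j rule: dec_induct)
  case base then show ?case by simp
next
  case (step m)
  have "(0::int) \<le> 3^m" by simp
  then show ?case unfolding power_Suc using step.IH by linarith
qed


abbreviation "R \<equiv> {(1::nat,1::int),(1,2),(1,3),(2,2),(2,3),(2,4),(3,3),(3,4),(3,8),(4,4),(5,8),(6,12),(7,8)}"

lemma fin1: assumes "k \<ge> 1" "k \<le> 5" "i \<le> 9" "m = 1 \<or> m = 3" "G k (m*2^i) = 0"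
  shows "(k, m*2^i) \<in> R"
proof -
  have "k \<in> {1,2,3,4,5}" using assms by auto
  moreover have "i \<in> {0,1,2,3,4,5,6,7,8,9}" using assms by auto
  ultimately show ?thesis using assms(4,5) apply (simp only: insert_iff empty_iff)
    apply (elim disjE; simp add: G_def)
    done
qed

lemma fin2: assumes "k \<ge> 6" "n \<in> {1,2,4,8,3,6,12,24}" "G k n = 0"
  shows "(k, n) \<in> R"
proof (cases "k \<le> 12")
  case True
  then have "k \<in> {6,7,8,9,10,11,12}" using assms by auto
  then show ?thesis using assms(2,3) apply (simp only: insert_iff empty_iff)
    apply (elim disjE; simp add: G_def)
    done
next
  case False
  then obtain j where kj: "k = Suc j" and j: "j \<ge> 12" by (cases k) auto
  from pow_ratio[OF j] have r: "31 * (3::int)^j \<le> 4^j" .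
  have "(3::int)^12 \<le> 3^j" using j by (intro power_increasing) auto
  then have t: "(531441::int) \<le> 3^j" by simp
  have p: "(0::int) \<le> 2^j" by simp
  from assms(2) have "G k n < 0" using r t unfolding kj apply (simp only: insert_iff empty_iff)
    apply (elim disjE; simp add: G_def)
    apply (use p in linarith)+
    done
  with assms(3) show ?thesis by simp
qed


lemma cop316: "coprime (3::int) 16"
proof (rule coprimeI)
  fix c :: int assume "c dvd 3" "c dvd 16"
  then have "c dvd 3*11 - 16*2" by (intro dvd_diff dvd_mult2) auto
  then show "is_unit c" by simp
qed

lemma G_roots: assumes k1: "k \<ge> 1" and n0: "n > 0" and G0: "G k n = 0"
  shows "(k, n) \<in> R"
proof -
  obtain j where kj: "k = Suc j" using k1 by (cases k) auto
  define A where "A = (2::int)^j"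
  define B where "B = (3::int)^j"
  have four: "(4::int)^j = A*A" unfolding A_def power_mult_distrib[symmetric] by simp
  define S where "S = (n-1)*(n-2) - 3*A*(n-1) + 6*B"
  have GS: "G k n = n*S - 6*A*A" unfolding G_def kj S_def A_def B_def using four[unfolded A_def]
    by (simp add: algebra_simps)
  have "(2::int)^(2*j+1) = 2*4^j" by (simp add: power_add power_mult)
  then have "6*A*A = 3 * (2::int)^(2*j+1)" using four by simp
  with GS G0 have nS: "n*S = 3 * 2^(2*j+1)" by simp
  then have "n dvd 3 * 2^(2*j+1)" by (metis dvd_triv_left)
  from dvd_3pow2[OF n0 this] obtain i m where i: "i \<le> 2*j+1" and m: "m = 1 \<or> m = (3::int)"
    and nm: "n = m * 2^i" by (metis mult_1)
  show ?thesis
  proof (cases "j \<le> 4")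
    case True
    then have k5: "k \<le> 5" using kj by simp
    have i9: "i \<le> 9" using True i by simp
    have "G k (m*2^i) = 0" using G0 nm by simp
    from fin1[OF k1 k5 i9 m this] show ?thesis using nm by simp
  next
    case False
    then have j5: "j \<ge> 5" by simp
    show ?thesis
    proof (cases "i \<le> 3")
      case True
      then have "i \<in> {0,1,2,3}" by auto
      then have "n \<in> {1,2,4,8,3,6,12,24}" using m nm
        apply (simp only: insert_iff empty_iff)
        apply (elim disjE; simp)
        done
      moreover have "k \<ge> 6" using kj j5 by simp
      ultimately show ?thesis using fin2 G0 by (simp only:)
    next
      case i4: False
      show ?thesis
      proof (cases "i \<ge> 2*j - 2")
        case True
        have A32: "A \<ge> 32" unfolding A_def using power_increasing[of 5 j "2::int"] j5 by simp
        have c1: "(2::int)^i \<ge> 2^(2*j-2)" using True by (intro power_increasing) auto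
        have c2: "(2::int)^(2*j-2) = A * 2^(j-2)" unfolding A_def
          using j5 by (simp add: power_add[symmetric])
        have "(2::int)^(j-2) \<ge> 8" using power_increasing[of 3 "j-2" "2::int"] j5 by simp
        then have c3: "A * 2^(j-2) \<ge> A * 8" using A32 by (intro mult_left_mono) auto
        have "2^i \<ge> 8*A" using c1 c2 c3 by linarith
        moreover have "n \<ge> 2^i" using m nm by auto
        ultimately have n8: "n \<ge> 8*A" by simp
        have B0: "B \<ge> 0" unfolding B_def by simp
        have h1: "n - 2 - 3*A \<ge> 1" using n8 A32 by linarith
        have n1: "n - 1 \<ge> 8*A - 1" "8*A - 1 \<ge> 0" "n \<ge> 0" using n8 A32 by linarith+
        have h2: "n*(n-1) \<ge> 0" using n1 by (intro mult_nonneg_nonneg) linarith+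
        have e1: "n*(n-1)*(n-2-3*A) \<ge> n*(n-1)*1" using h1 h2 by (intro mult_left_mono) auto
        have e2: "n*(n-1) \<ge> (8*A)*(8*A-1)" by (intro mult_mono) (use n8 n1 A32 in linarith)+
        have "A*A \<ge> A*1" using A32 by (intro mult_left_mono) auto
        moreover have "(8*A)*(8*A-1) = 64*(A*A) - 8*A" "6*A*A = 6*(A*A)" by (simp_all add: algebra_simps)
        ultimately have e3: "(8*A)*(8*A-1) > 6*A*A" using A32 by linarith
        have e4: "6*B*n \<ge> 0" using B0 n1 by simp
        have e5: "G k n = n*(n-1)*(n-2-3*A) + 6*B*n - 6*A*A" using GS unfolding S_def
          by (simp add: algebra_simps)
        have "G k n > 0" using e1 e2 e3 e4 e5 by linarith
        with G0 show ?thesis by simp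
      next
        case False
        then have ii: "4 \<le> i" "i + 4 \<le> 2*j + 1" using i4 by auto
        have "i = 4 + (i-4)" using ii by simp
        then have "(2::int)^i = 2^4 * 2^(i-4)" by (metis power_add)
        then have t: "n = 16*(m*2^(i-4))" using nm by simp
        define t where "t = m*2^(i-4)"
        have "j = 4 + (j-4)" using j5 by simp
        then have "(2::int)^j = 2^4 * 2^(j-4)" by (metis power_add)
        then have u: "A = 16*2^(j-4)" unfolding A_def by simp
        define u where "u = (2::int)^(j-4)"
        have "m * 2^i * S = m * S * 2^i" by simp
        moreover have "(3::int) * 2^(2*j+1) = 3 * 2^(2*j+1-i) * 2^i"
          using ii by (simp add: power_add[symmetric])
        ultimately have "m * S * 2^i = 3 * 2^(2*j+1-i) * 2^i" using nS nm by simp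
        then have mS: "m * S = 3 * 2^(2*j+1-i)" by simp
        have "2*j+1-i = 4 + (2*j+1-i-4)" using ii by simp
        then have "(2::int)^(2*j+1-i) = 2^4 * 2^(2*j+1-i-4)" by (metis power_add)
        then have "(2::int)^(2*j+1-i) = 16 * 2^(2*j+1-i-4)" by simp
        with mS have "16 dvd m * S" by simp
        moreover have "coprime m 16" using m cop316 by auto
        ultimately have "16 dvd S" using coprime_dvd_mult_right_iff[of 16 m S] by (simp add: coprime_commute)
        moreover have "2 + 6*B = S - 16*(16*t*t - 3*t - 48*u*t + 3*u)"
          unfolding S_def t u t_def u_def by (simp add: algebra_simps)
        ultimately have "16 dvd 2 + 6*B" by (metis dvd_diff dvd_triv_left)
        then have d: "(2 + 6*B) mod 16 = 0" by simp
        obtain q r where qr: "B = 16*q + r" "r \<in> {1,3,9,11}"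
          using pow3_mod16[of j] unfolding B_def by (metis div_mult_mod_eq mult.commute)
        have "2 + 6*B = (2 + 6*r) + (6*q)*16" unfolding qr(1) by (simp add: algebra_simps)
        then have "(2 + 6*B) mod 16 = (2 + 6*r) mod 16" by (simp only: mod_mult_self1)
        with d have d2: "(2 + 6*r) mod 16 = 0" by simp
        from qr(2) have "r = 1 \<or> r = 3 \<or> r = 9 \<or> r = 11" by simp
        then have False using d2 by (elim disjE) simp_all
        then show ?thesis ..

      qed
    qed
  qed
qed


theorem mainTheorem14:
  shows "(\<forall>(n::int) k::nat. n > 4 \<longrightarrow> k \<ge> 1 \<longrightarrow>
            (moser 4 k (of_int n) = 0 \<longleftrightarrow> (k, n) \<in> {(3, 8), (5, 8), (6, 12), (7, 8)}))
       \<and> (\<forall>(n::int) k::nat. k > 7 \<longrightarrow> n > 0 \<longrightarrow> moser 4 k (of_int n) \<noteq> 0)"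
proof (intro conjI allI impI)
  fix n :: int and k :: nat
  assume n4: "n > 4" and k1: "k \<ge> 1"
  show "moser 4 k (of_int n) = 0 \<longleftrightarrow> (k, n) \<in> {(3, 8), (5, 8), (6, 12), (7, 8)}"
  proof
    assume "moser 4 k (of_int n) = 0"
    then have "G k n = 0" by (simp add: moser_G)
    from G_roots[OF k1 _ this] n4 show "(k, n) \<in> {(3, 8), (5, 8), (6, 12), (7, 8)}" by auto
  next
    assume "(k, n) \<in> {(3, 8), (5, 8), (6, 12), (7, 8)}"
    then have "G k n = 0" by (auto simp: G_def)
    then show "moser 4 k (of_int n) = 0" by (simp add: moser_G)
  qed
next
  fix n :: int and k :: nat
  assume k7: "k > 7" and n0: "n > 0"
  show "moser 4 k (of_int n) \<noteq> 0"
  proof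
    assume "moser 4 k (of_int n) = 0"
    then have "G k n = 0" by (simp add: moser_G)
    from G_roots[OF _ n0 this] k7 show False by auto
  qed
qed

end
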